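(* Let $\mathcal{L}=(R_i:i<k)$ be a finite relational language, $K$ a Fraïssé class of finite $\mathcal{L}$-structures with the Strong Amalgamation Property, and $T$ the theory of its Fraïssé limit. Let $N=(A,B)$ be a monster model of $T_{pfc}$ (with $A$ the universe of sort $O$ and $B$ the universe of sort $P$). Then for any $A_0\subseteq A$ and $B_0\subseteq B$, we have $\mathrm{acl}(A_0\cup B_0)\cap B=B_0$.
   Context: $K$ has SAP if for all $A,B,C\in K$ and embeddings $e:A\to B$, $f:A\to C$ there are $D\in K$ and embeddings $g:B\to D$, $h:C\to D$ with $ge=hf$ and $\mathrm{im}(g)\cap\mathrm{im}(h)=\mathrm{im}(ge)$. If $R_i$ has arity $n_i$, $\mathcal{L}_{pfc}$ is the two-sorted language with sorts $O$ and $P$ and relation symbols $R^i_x(x,y_1,\dots,y_{n_i})$ with $x$ of sort $P$ and $y_1,\dots,y_{n_i}$ of sort $O$. For an $\mathcal{L}_{pfc}$-structure $M=(A,B)$ and $b\in B$, $A_b$ is the $\mathcal{L}$-structure with domain $A$ in which $R_i$ is interpreted as $\{\bar y: R^i(b,\bar y)\}$. $K_{pfc}$ is the class of finite $\mathcal{L}_{pfc}$-structures $(A,B)$ such that $A_b$ is isomorphic to a member of $K$ for every $b\in B$; it is a Fraïssé class with SAP, and $T_{pfc}$ is the theory of its Fraïssé limit (it has quantifier elimination). acl is computed in $N$ over parameters from both sorts. *)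

theory Defs
  imports Main "HOL-Library.Countable_Set"
begin

text \<open>The language L = (R_i : i < k) is given by k and the arity function ar.
  An L-structure is a domain together with an interpretation of the R_i
  as sets of tuples (lists) of length ar i.\<close>

record 'u lstr =
  ldom :: "'u set"
  lrel :: "nat \<Rightarrow> 'u list \<Rightarrow> bool"

definition wf_lstr :: "nat \<Rightarrow> (nat \<Rightarrow> nat) \<Rightarrow> ('u, 'z) lstr_scheme \<Rightarrow> bool" where
  "wf_lstr k ar S \<longleftrightarrow>
     (\<forall>i ys. lrel S i ys \<longrightarrow> i < k \<and> length ys = ar i \<and> set ys \<subseteq> ldom S)"

definition lemb :: "('u \<Rightarrow> 'v) \<Rightarrow> 'u lstr \<Rightarrow> 'v lstr \<Rightarrow> bool" where
  "lemb f S T \<longleftrightarrow> inj_on f (ldom S) \<and> f ` ldom S \<subseteq> ldom T \<and>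
     (\<forall>i. \<forall>ys \<in> lists (ldom S). lrel S i ys \<longleftrightarrow> lrel T i (map f ys))"

definition liso :: "('u \<Rightarrow> 'v) \<Rightarrow> 'u lstr \<Rightarrow> 'v lstr \<Rightarrow> bool" where
  "liso f S T \<longleftrightarrow> lemb f S T \<and> f ` ldom S = ldom T"

definition lisomorphic :: "'u lstr \<Rightarrow> 'v lstr \<Rightarrow> bool" where
  "lisomorphic S T \<longleftrightarrow> (\<exists>f. liso f S T)"

definition lrestrict :: "'u lstr \<Rightarrow> 'u set \<Rightarrow> 'u lstr" where
  "lrestrict S D = \<lparr>ldom = D, lrel = (\<lambda>i ys. lrel S i ys \<and> set ys \<subseteq> D)\<rparr>"

text \<open>A class K of finite L-structures (represented, up to isomorphism, by
  structures with universe a subset of nat).\<close>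

definition fraisse_class :: "nat \<Rightarrow> (nat \<Rightarrow> nat) \<Rightarrow> nat lstr set \<Rightarrow> bool" where
  "fraisse_class k ar K \<longleftrightarrow>
     K \<noteq> {} \<and>
     (\<forall>S\<in>K. wf_lstr k ar S \<and> finite (ldom S)) \<and>
     (\<forall>S\<in>K. \<forall>T. wf_lstr k ar T \<and> lisomorphic S T \<longrightarrow> T \<in> K) \<and>
     (\<forall>S\<in>K. \<forall>D. D \<subseteq> ldom S \<longrightarrow> lrestrict S D \<in> K) \<and>
     (\<forall>S1\<in>K. \<forall>S2\<in>K. \<exists>S3\<in>K. (\<exists>g. lemb g S1 S3) \<and> (\<exists>h. lemb h S2 S3)) \<and>
     (\<forall>S0\<in>K. \<forall>S1\<in>K. \<forall>S2\<in>K. \<forall>e f. lemb e S0 S1 \<and> lemb f S0 S2 \<longrightarrow>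
        (\<exists>S3\<in>K. \<exists>g h. lemb g S1 S3 \<and> lemb h S2 S3 \<and>
           (\<forall>a\<in>ldom S0. g (e a) = h (f a))))"

definition SAP :: "nat lstr set \<Rightarrow> bool" where
  "SAP K \<longleftrightarrow>
     (\<forall>S0\<in>K. \<forall>S1\<in>K. \<forall>S2\<in>K. \<forall>e f. lemb e S0 S1 \<and> lemb f S0 S2 \<longrightarrow>
        (\<exists>S3\<in>K. \<exists>g h. lemb g S1 S3 \<and> lemb h S2 S3 \<and>
           (\<forall>a\<in>ldom S0. g (e a) = h (f a)) \<and>
           g ` ldom S1 \<inter> h ` ldom S2 = (g \<circ> e) ` ldom S0))"

text \<open>sO is the universe of sort O, sP the universe of sort P, and
  prel i b ys means R^i(b, ys).\<close>

record ('a, 'b) pstr =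
  sO :: "'a set"
  sP :: "'b set"
  prel :: "nat \<Rightarrow> 'b \<Rightarrow> 'a list \<Rightarrow> bool"

definition wf_pstr :: "nat \<Rightarrow> (nat \<Rightarrow> nat) \<Rightarrow> ('a, 'b) pstr \<Rightarrow> bool" where
  "wf_pstr k ar M \<longleftrightarrow>
     (\<forall>i b ys. prel M i b ys \<longrightarrow> i < k \<and> b \<in> sP M \<and> length ys = ar i \<and> set ys \<subseteq> sO M)"

definition fibre :: "('a, 'b) pstr \<Rightarrow> 'b \<Rightarrow> 'a lstr" where
  "fibre M b = \<lparr>ldom = sO M, lrel = (\<lambda>i ys. prel M i b ys)\<rparr>"

definition in_Kpfc :: "nat \<Rightarrow> (nat \<Rightarrow> nat) \<Rightarrow> nat lstr set \<Rightarrow> ('a, 'b) pstr \<Rightarrow> bool" where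
  "in_Kpfc k ar K M \<longleftrightarrow> wf_pstr k ar M \<and> finite (sO M) \<and> finite (sP M) \<and>
     (\<forall>b\<in>sP M. \<exists>S\<in>K. lisomorphic (fibre M b) S)"

definition pemb :: "('a \<Rightarrow> 'c) \<Rightarrow> ('b \<Rightarrow> 'd) \<Rightarrow> ('a, 'b) pstr \<Rightarrow> ('c, 'd) pstr \<Rightarrow> bool" where
  "pemb f g M N \<longleftrightarrow> inj_on f (sO M) \<and> inj_on g (sP M) \<and>
     f ` sO M \<subseteq> sO N \<and> g ` sP M \<subseteq> sP N \<and>
     (\<forall>i. \<forall>b\<in>sP M. \<forall>ys\<in>lists (sO M). prel M i b ys \<longleftrightarrow> prel N i (g b) (map f ys))"

definition piso :: "('a \<Rightarrow> 'c) \<Rightarrow> ('b \<Rightarrow> 'd) \<Rightarrow> ('a, 'b) pstr \<Rightarrow> ('c, 'd) pstr \<Rightarrow> bool" where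
  "piso f g M N \<longleftrightarrow> pemb f g M N \<and> f ` sO M = sO N \<and> g ` sP M = sP N"

definition prestrict :: "('a, 'b) pstr \<Rightarrow> 'a set \<Rightarrow> 'b set \<Rightarrow> ('a, 'b) pstr" where
  "prestrict M A B = \<lparr>sO = A, sP = B,
      prel = (\<lambda>i b ys. prel M i b ys \<and> b \<in> B \<and> set ys \<subseteq> A)\<rparr>"

definition fraisse_limit_pfc ::
    "nat \<Rightarrow> (nat \<Rightarrow> nat) \<Rightarrow> nat lstr set \<Rightarrow> ('a, 'b) pstr \<Rightarrow> bool" where
  "fraisse_limit_pfc k ar K M \<longleftrightarrow>
     wf_pstr k ar M \<and> countable (sO M) \<and> countable (sP M) \<and>
     (\<forall>A' B'. A' \<subseteq> sO M \<and> B' \<subseteq> sP M \<and> finite A' \<and> finite B' \<longrightarrow>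
        in_Kpfc k ar K (prestrict M A' B')) \<and>
     (\<forall>F :: (nat, nat) pstr. in_Kpfc k ar K F \<longrightarrow> (\<exists>f g. pemb f g F M)) \<and>
     (\<forall>A1 B1 A2 B2 f g. A1 \<subseteq> sO M \<and> B1 \<subseteq> sP M \<and> A2 \<subseteq> sO M \<and> B2 \<subseteq> sP M \<and>
        finite A1 \<and> finite B1 \<and>
        piso f g (prestrict M A1 B1) (prestrict M A2 B2) \<longrightarrow>
        (\<exists>F G. piso F G M M \<and> (\<forall>a\<in>A1. F a = f a) \<and> (\<forall>b\<in>B1. G b = g b)))"

text \<open>Variables of sort O and of sort P are both indexed by nat (separately).\<close>
datatype fm =
    EqO nat nat
  | EqP nat nat
  | Rl nat nat "nat list"   \<comment> \<open>Rl i x ys = R^i(x, ys), x of sort P, ys of sort O\<close>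
  | Neg fm
  | Conj fm fm
  | ExO nat fm
  | ExP nat fm

fun fvO :: "fm \<Rightarrow> nat set" where
  "fvO (EqO x y) = {x, y}"
| "fvO (EqP x y) = {}"
| "fvO (Rl i x ys) = set ys"
| "fvO (Neg p) = fvO p"
| "fvO (Conj p q) = fvO p \<union> fvO q"
| "fvO (ExO x p) = fvO p - {x}"
| "fvO (ExP x p) = fvO p"

fun fvP :: "fm \<Rightarrow> nat set" where
  "fvP (EqO x y) = {}"
| "fvP (EqP x y) = {x, y}"
| "fvP (Rl i x ys) = {x}"
| "fvP (Neg p) = fvP p"
| "fvP (Conj p q) = fvP p \<union> fvP q"
| "fvP (ExO x p) = fvP p"
| "fvP (ExP x p) = fvP p - {x}"

fun sat :: "('a, 'b) pstr \<Rightarrow> fm \<Rightarrow> (nat \<Rightarrow> 'a) \<Rightarrow> (nat \<Rightarrow> 'b) \<Rightarrow> bool" where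
  "sat M (EqO x y) va vb \<longleftrightarrow> va x = va y"
| "sat M (EqP x y) va vb \<longleftrightarrow> vb x = vb y"
| "sat M (Rl i x ys) va vb \<longleftrightarrow> prel M i (vb x) (map va ys)"
| "sat M (Neg p) va vb \<longleftrightarrow> \<not> sat M p va vb"
| "sat M (Conj p q) va vb \<longleftrightarrow> sat M p va vb \<and> sat M q va vb"
| "sat M (ExO x p) va vb \<longleftrightarrow> (\<exists>a\<in>sO M. sat M p (va(x := a)) vb)"
| "sat M (ExP x p) va vb \<longleftrightarrow> (\<exists>b\<in>sP M. sat M p va (vb(x := b)))"

definition sentence :: "fm \<Rightarrow> bool" where
  "sentence p \<longleftrightarrow> fvO p = {} \<and> fvP p = {}"

definition models_Th :: "('a, 'b) pstr \<Rightarrow> ('c, 'd) pstr \<Rightarrow> bool" where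
  "models_Th N M \<longleftrightarrow> (\<forall>p. sentence p \<longrightarrow>
      ((\<forall>va vb. sat N p va vb) \<longleftrightarrow> (\<forall>va vb. sat M p va vb)))"

text \<open>The sort-P part of acl(A0 \<union> B0) computed in N: the elements b of sort P
  satisfying some formula phi(y, parameters from A0 \<union> B0) with only finitely
  many realisations of sort P in N.\<close>
definition aclP :: "('a, 'b) pstr \<Rightarrow> 'a set \<Rightarrow> 'b set \<Rightarrow> 'b set" where
  "aclP N A0 B0 = {b \<in> sP N. \<exists>p y va vb.
      (\<forall>x\<in>fvO p. va x \<in> A0) \<and> (\<forall>x\<in>fvP p - {y}. vb x \<in> B0) \<and>
      sat N p va (vb(y := b)) \<and>
      finite {b' \<in> sP N. sat N p va (vb(y := b'))}}"

end

theory Submission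
  imports Defs
begin


lemma fin_fvO: "finite (fvO p)" by (induction p) auto
lemma fin_fvP: "finite (fvP p)" by (induction p) auto

lemma coinc:
  "(\<forall>x\<in>fvO p. va x = va' x) \<Longrightarrow> (\<forall>x\<in>fvP p. vb x = vb' x) \<Longrightarrow>
   sat M p va vb \<longleftrightarrow> sat M p va' vb'"
proof (induction p arbitrary: va va' vb vb')
  case (Rl i x ys)
  have m: "map va ys = map va' ys" using Rl by (auto intro: map_cong)
  have v: "vb x = vb' x" using Rl by simp
  show ?case by (simp only: sat.simps m v)
next
  case (ExO x p)
  have "sat M p (va(x:=a)) vb \<longleftrightarrow> sat M p (va'(x:=a)) vb'" for a
    by (rule ExO.IH) (use ExO.prems in auto)
  then show ?case by simp
next
  case (ExP x p)
  have "sat M p va (vb(x:=a)) \<longleftrightarrow> sat M p va' (vb'(x:=a))" for a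
    by (rule ExP.IH) (use ExP.prems in auto)
  then show ?case by simp
next
  case (Conj p q)
  have "sat M p va vb \<longleftrightarrow> sat M p va' vb'" by (rule Conj.IH(1)) (use Conj.prems in auto)
  moreover have "sat M q va vb \<longleftrightarrow> sat M q va' vb'" by (rule Conj.IH(2)) (use Conj.prems in auto)
  ultimately show ?case by simp
next
  case (Neg p)
  have "sat M p va vb \<longleftrightarrow> sat M p va' vb'" by (rule Neg.IH) (use Neg.prems in auto)
  then show ?case by simp
qed auto

fun allO :: "nat list \<Rightarrow> fm \<Rightarrow> fm" where
  "allO [] r = r"
| "allO (x#xs) r = Neg (ExO x (Neg (allO xs r)))"

fun allP :: "nat list \<Rightarrow> fm \<Rightarrow> fm" where
  "allP [] r = r"
| "allP (x#xs) r = Neg (ExP x (Neg (allP xs r)))"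

lemma fv_allO: "fvO (allO xs r) = fvO r - set xs" "fvP (allO xs r) = fvP r"
  by (induction xs) auto
lemma fv_allP: "fvO (allP xs r) = fvO r" "fvP (allP xs r) = fvP r - set xs"
  by (induction xs) auto

lemma sat_allO:
  "sat M (allO xs r) va vb \<longleftrightarrow>
   (\<forall>va'. (\<forall>x\<in>set xs. va' x \<in> sO M) \<and> (\<forall>x. x \<notin> set xs \<longrightarrow> va' x = va x) \<longrightarrow> sat M r va' vb)"
proof (induction xs arbitrary: va)
  case Nil
  then show ?case by (auto simp: fun_eq_iff)
next
  case (Cons x xs)
  show ?case
  proof
    assume L: "sat M (allO (x # xs) r) va vb"
    show "\<forall>va'. (\<forall>z\<in>set (x#xs). va' z \<in> sO M) \<and> (\<forall>z. z \<notin> set (x#xs) \<longrightarrow> va' z = va z) \<longrightarrow> sat M r va' vb"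
    proof (intro allI impI)
      fix va' assume H: "(\<forall>z\<in>set (x#xs). va' z \<in> sO M) \<and> (\<forall>z. z \<notin> set (x#xs) \<longrightarrow> va' z = va z)"
      have "sat M (allO xs r) (va(x := va' x)) vb" using L H by auto
      then show "sat M r va' vb" unfolding Cons.IH using H by auto
    qed
  next
    assume R: "\<forall>va'. (\<forall>z\<in>set (x#xs). va' z \<in> sO M) \<and> (\<forall>z. z \<notin> set (x#xs) \<longrightarrow> va' z = va z) \<longrightarrow> sat M r va' vb"
    have "sat M (allO xs r) (va(x := a)) vb" if a: "a \<in> sO M" for a
      unfolding Cons.IH
    proof (intro allI impI)
      fix va' assume H: "(\<forall>z\<in>set xs. va' z \<in> sO M) \<and> (\<forall>z. z \<notin> set xs \<longrightarrow> va' z = (va(x := a)) z)"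
      have "\<forall>z\<in>set (x#xs). va' z \<in> sO M" using H a by (cases "x \<in> set xs") auto
      moreover have "\<forall>z. z \<notin> set (x#xs) \<longrightarrow> va' z = va z" using H by auto
      ultimately show "sat M r va' vb" using R by blast
    qed
    then show "sat M (allO (x # xs) r) va vb" by auto
  qed
qed

lemma sat_allP:
  "sat M (allP ys r) va vb \<longleftrightarrow>
   (\<forall>vb'. (\<forall>x\<in>set ys. vb' x \<in> sP M) \<and> (\<forall>x. x \<notin> set ys \<longrightarrow> vb' x = vb x) \<longrightarrow> sat M r va vb')"
proof (induction ys arbitrary: vb)
  case Nil
  then show ?case by (auto simp: fun_eq_iff)
next
  case (Cons x xs)
  show ?case
  proof
    assume L: "sat M (allP (x # xs) r) va vb"
    show "\<forall>va'. (\<forall>z\<in>set (x#xs). va' z \<in> sP M) \<and> (\<forall>z. z \<notin> set (x#xs) \<longrightarrow> va' z = vb z) \<longrightarrow> sat M r va va'"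
    proof (intro allI impI)
      fix va' assume H: "(\<forall>z\<in>set (x#xs). va' z \<in> sP M) \<and> (\<forall>z. z \<notin> set (x#xs) \<longrightarrow> va' z = vb z)"
      have "sat M (allP xs r) va (vb(x := va' x))" using L H by auto
      then show "sat M r va va'" unfolding Cons.IH using H by auto
    qed
  next
    assume R: "\<forall>va'. (\<forall>z\<in>set (x#xs). va' z \<in> sP M) \<and> (\<forall>z. z \<notin> set (x#xs) \<longrightarrow> va' z = vb z) \<longrightarrow> sat M r va va'"
    have "sat M (allP xs r) va (vb(x := a))" if a: "a \<in> sP M" for a
      unfolding Cons.IH
    proof (intro allI impI)
      fix va' assume H: "(\<forall>z\<in>set xs. va' z \<in> sP M) \<and> (\<forall>z. z \<notin> set xs \<longrightarrow> va' z = (vb(x := a)) z)"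
      have "\<forall>z\<in>set (x#xs). va' z \<in> sP M" using H a by (cases "x \<in> set xs") auto
      moreover have "\<forall>z. z \<notin> set (x#xs) \<longrightarrow> va' z = vb z" using H by auto
      ultimately show "sat M r va va'" using R by blast
    qed
    then show "sat M (allP (x # xs) r) va vb" by auto
  qed
qed

lemma transfer:
  assumes "models_Th N M" "fvO q \<subseteq> set xs" "fvP q \<subseteq> set ys"
    and HM: "\<forall>va vb. (\<forall>x\<in>set xs. va x \<in> sO M) \<longrightarrow> (\<forall>x\<in>set ys. vb x \<in> sP M) \<longrightarrow> sat M q va vb"
    and "\<forall>x\<in>set xs. va x \<in> sO N" "\<forall>x\<in>set ys. vb x \<in> sP N"
  shows "sat N q va vb"
proof -
  let ?s = "allO xs (allP ys q)"
  have sent: "sentence ?s" using assms(2,3) by (auto simp: sentence_def fv_allO fv_allP)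
  have "\<forall>va vb. sat M ?s va vb" unfolding sat_allO sat_allP using HM by blast
  then have "\<forall>va vb. sat N ?s va vb" using assms(1) sent unfolding models_Th_def by blast
  then have "sat N ?s va vb" by blast
  then show ?thesis unfolding sat_allO sat_allP using assms(5,6) by blast
qed



lemma bex_img: "(\<exists>y\<in>f`A. P y) = (\<exists>x\<in>A. P (f x))" by blast

lemma invar:
  assumes wf: "wf_pstr k ar M" and iso: "piso F G M M"
  shows "(\<forall>x\<in>fvO p. va x \<in> sO M) \<Longrightarrow> (\<forall>x\<in>fvP p. vb x \<in> sP M) \<Longrightarrow>
    sat M p (F \<circ> va) (G \<circ> vb) \<longleftrightarrow> sat M p va vb"
proof (induction p arbitrary: va vb)
  case (EqO x y)
  have "inj_on F (sO M)" using iso by (simp add: piso_def pemb_def)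
  then show ?case using EqO by (auto dest: inj_onD)
next
  case (EqP x y)
  have "inj_on G (sP M)" using iso by (simp add: piso_def pemb_def)
  then show ?case using EqP by (auto dest: inj_onD)
next
  case (Rl i x ys)
  have "vb x \<in> sP M" "map va ys \<in> lists (sO M)" using Rl by auto
  then have "prel M i (vb x) (map va ys) \<longleftrightarrow> prel M i (G (vb x)) (map F (map va ys))"
    using iso unfolding piso_def pemb_def by blast
  then show ?case by (simp add: comp_def)
next
  case (Neg p)
  then show ?case by simp
next
  case (Conj p q)
  have "sat M p (F \<circ> va) (G \<circ> vb) \<longleftrightarrow> sat M p va vb" by (rule Conj.IH(1)) (use Conj.prems in auto)
  moreover have "sat M q (F \<circ> va) (G \<circ> vb) \<longleftrightarrow> sat M q va vb" by (rule Conj.IH(2)) (use Conj.prems in auto)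
  ultimately show ?case by (simp only: sat.simps)
next
  case (ExO x p)
  have img: "F ` sO M = sO M" using iso by (simp add: piso_def)
  have IH: "sat M p ((F \<circ> va)(x := F a)) (G \<circ> vb) \<longleftrightarrow> sat M p (va(x:=a)) vb" if "a \<in> sO M" for a
  proof -
    have eq: "(F \<circ> va)(x := F a) = F \<circ> (va(x:=a))" by (auto simp: fun_eq_iff)
    show ?thesis unfolding eq by (rule ExO.IH) (use ExO.prems that in auto)
  qed
  have "(\<exists>a'\<in>sO M. sat M p ((F \<circ> va)(x := a')) (G \<circ> vb)) \<longleftrightarrow>
        (\<exists>a\<in>sO M. sat M p ((F \<circ> va)(x := F a)) (G \<circ> vb))"
    by (subst (1) img[symmetric]) (rule bex_img)
  also have "\<dots> \<longleftrightarrow> (\<exists>a\<in>sO M. sat M p (va(x:=a)) vb)" using IH by blast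
  finally show ?case by (simp only: sat.simps)
next
  case (ExP x p)
  have img: "G ` sP M = sP M" using iso by (simp add: piso_def)
  have IH: "sat M p (F \<circ> va) ((G \<circ> vb)(x := G a)) \<longleftrightarrow> sat M p va (vb(x:=a))" if "a \<in> sP M" for a
  proof -
    have eq: "(G \<circ> vb)(x := G a) = G \<circ> (vb(x:=a))" by (auto simp: fun_eq_iff)
    show ?thesis unfolding eq by (rule ExP.IH) (use ExP.prems that in auto)
  qed
  have "(\<exists>a'\<in>sP M. sat M p (F \<circ> va) ((G \<circ> vb)(x := a'))) \<longleftrightarrow>
        (\<exists>a\<in>sP M. sat M p (F \<circ> va) ((G \<circ> vb)(x := G a)))"
    by (subst (1) img[symmetric]) (rule bex_img)
  also have "\<dots> \<longleftrightarrow> (\<exists>a\<in>sP M. sat M p va (vb(x:=a)))" using IH by blast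
  finally show ?case by (simp only: sat.simps)
qed


lemma liso_trans: assumes f: "liso f S T" and g: "liso g T U" shows "liso (g \<circ> f) S U"
proof -
  have fi: "inj_on f (ldom S)" "f ` ldom S = ldom T"
    and fr: "\<And>i ys. ys \<in> lists (ldom S) \<Longrightarrow> lrel S i ys \<longleftrightarrow> lrel T i (map f ys)"
    using f unfolding liso_def lemb_def by auto
  have gi: "inj_on g (ldom T)" "g ` ldom T = ldom U"
    and gr: "\<And>i ys. ys \<in> lists (ldom T) \<Longrightarrow> lrel T i ys \<longleftrightarrow> lrel U i (map g ys)"
    using g unfolding liso_def lemb_def by auto
  have 1: "inj_on (g \<circ> f) (ldom S)" using fi gi comp_inj_on by metis
  have 2: "(g \<circ> f) ` ldom S = ldom U" using fi gi by (metis image_comp)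
  have 3: "lrel S i ys \<longleftrightarrow> lrel U i (map (g \<circ> f) ys)" if "ys \<in> lists (ldom S)" for i ys
  proof -
    have "map f ys \<in> lists (ldom T)" using that by (auto simp flip: fi(2))
    then show ?thesis using fr[OF that] gr by simp
  qed
  show ?thesis unfolding liso_def lemb_def using 1 2 3 by auto
qed

lemma lim_uh:
  assumes "fraisse_limit_pfc k ar K M"
  shows "\<forall>A1 B1 A2 B2 f g. A1 \<subseteq> sO M \<and> B1 \<subseteq> sP M \<and> A2 \<subseteq> sO M \<and> B2 \<subseteq> sP M \<and>
        finite A1 \<and> finite B1 \<and>
        piso f g (prestrict M A1 B1) (prestrict M A2 B2) \<longrightarrow>
        (\<exists>F G. piso F G M M \<and> (\<forall>a\<in>A1. F a = f a) \<and> (\<forall>b\<in>B1. G b = g b))"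
  using assms unfolding fraisse_limit_pfc_def by (elim conjE) assumption

lemma lim_wf: "fraisse_limit_pfc k ar K M \<Longrightarrow> wf_pstr k ar M"
  unfolding fraisse_limit_pfc_def by (elim conjE) assumption

lemma lim_age: "fraisse_limit_pfc k ar K M \<Longrightarrow> \<forall>A' B'. A' \<subseteq> sO M \<and> B' \<subseteq> sP M \<and> finite A' \<and> finite B' \<longrightarrow>
        in_Kpfc k ar K (prestrict M A' B')"
  unfolding fraisse_limit_pfc_def by (elim conjE) assumption

lemma lim_univ: "fraisse_limit_pfc k ar K M \<Longrightarrow> \<forall>F :: (nat, nat) pstr. in_Kpfc k ar K F \<longrightarrow> (\<exists>f g. pemb f g F M)"
  unfolding fraisse_limit_pfc_def by (elim conjE) assumption

lemma swap_point:
  assumes lim: "fraisse_limit_pfc k ar K M"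
    and A1: "finite A1" "A1 \<subseteq> sO M" and Z: "finite Z0" "Z0 \<subseteq> sP M"
    and b: "b \<in> sP M" "b \<notin> Z0" and b': "b' \<in> sP M" "b' \<notin> Z0"
    and fib: "\<forall>i. \<forall>ys\<in>lists A1. prel M i b' ys \<longleftrightarrow> prel M i b ys"
  shows "\<exists>F G. piso F G M M \<and> (\<forall>a\<in>A1. F a = a) \<and> (\<forall>z\<in>Z0. G z = z) \<and> G b = b'"
proof -
  define g where "g = (\<lambda>x. if x = b then b' else x)"
  have "piso id g (prestrict M A1 (insert b Z0)) (prestrict M A1 (insert b' Z0))"
  proof -
    have 1: "inj_on g (insert b Z0)" using b' unfolding g_def inj_on_def by auto
    have 2: "g ` insert b Z0 = insert b' Z0" using b unfolding g_def by auto
    have 3: "\<forall>i. \<forall>c\<in>insert b Z0. \<forall>ys\<in>lists A1. prel M i c ys = (prel M i (g c) ys \<and> (g c = b' \<or> g c \<in> Z0))"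
      using fib b unfolding g_def by auto
    show ?thesis unfolding piso_def pemb_def prestrict_def using 1 2 3 by simp
  qed
  moreover have "insert b Z0 \<subseteq> sP M" "insert b' Z0 \<subseteq> sP M" "finite (insert b Z0)"
    using Z b b' by auto
  ultimately have "\<exists>F G. piso F G M M \<and> (\<forall>a\<in>A1. F a = id a) \<and> (\<forall>c\<in>insert b Z0. G c = g c)"
    apply - apply (rule lim_uh[OF lim, rule_format, of A1 "insert b Z0" A1 "insert b' Z0" id g]) using A1 by auto
  then obtain F G where FG: "piso F G M M" "\<forall>a\<in>A1. F a = id a" "\<forall>c\<in>insert b Z0. G c = g c"
    by blast
  have "\<forall>z\<in>Z0. G z = z" "G b = b'" using FG(3) b unfolding g_def by auto
  then show ?thesis using FG(1,2) by auto
qed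



lemma new_point:
  assumes lim: "fraisse_limit_pfc k ar K M"
    and A1: "finite A1" "A1 \<subseteq> sO M" and C: "finite C" "C \<subseteq> sP M" and b: "b \<in> sP M"
  shows "\<exists>b'\<in>sP M. b' \<notin> C \<and> (\<forall>i. \<forall>ys\<in>lists A1. prel M i b' ys \<longleftrightarrow> prel M i b ys)"
proof -
  have wf: "wf_pstr k ar M" by (rule lim_wf[OF lim])
  obtain as where as: "set as = A1" "distinct as" using finite_distinct_list A1(1) by blast
  obtain cs where cs: "set cs = C" "distinct cs" using finite_distinct_list C(1) by blast
  define m where "m = length as"
  define n where "n = length cs"
  define e where "e = (\<lambda>i. as ! i)"
  define dd where "dd = (\<lambda>j. if j < n then cs ! j else b)"
  define F0 :: "(nat, nat) pstr" where "F0 = \<lparr>sO = {..<m}, sP = {..<Suc n},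
      prel = (\<lambda>i j ys. j < Suc n \<and> set ys \<subseteq> {..<m} \<and> prel M i (dd j) (map e ys))\<rparr>"
  have ebij: "bij_betw e {..<m} A1" unfolding e_def m_def using as by (intro bij_betw_nth) auto
  have einj: "inj_on e {..<m}" and eimg: "e ` {..<m} = A1" using ebij by (auto simp: bij_betw_def)
  have cbij: "bij_betw (\<lambda>j. cs ! j) {..<n} C" unfolding n_def using cs by (intro bij_betw_nth) auto
  have cinj: "inj_on (\<lambda>j. cs ! j) {..<n}" and cimg: "(\<lambda>j. cs ! j) ` {..<n} = C"
    using cbij by (auto simp: bij_betw_def)
  have dd_in: "dd j \<in> sP M" if "j < Suc n" for j
  proof (cases "j < n")
    case True
    then have "cs ! j \<in> C" using cimg by blast
    then show ?thesis using C True unfolding dd_def by auto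
  qed (use b in \<open>auto simp: dd_def\<close>)
  have Kp: "in_Kpfc k ar K F0"
    unfolding in_Kpfc_def
  proof (intro conjI)
    show "wf_pstr k ar F0" unfolding wf_pstr_def
    proof (intro allI impI)
      fix i j ys assume "prel F0 i j ys"
      then have h: "j < Suc n" "set ys \<subseteq> {..<m}" "prel M i (dd j) (map e ys)" by (auto simp: F0_def)
      then have "i < k \<and> length (map e ys) = ar i" using wf unfolding wf_pstr_def by blast
      then show "i < k \<and> j \<in> sP F0 \<and> length ys = ar i \<and> set ys \<subseteq> sO F0" using h by (auto simp: F0_def)
    qed
    show "finite (sO F0)" "finite (sP F0)" by (auto simp: F0_def)
    show "\<forall>j\<in>sP F0. \<exists>S\<in>K. lisomorphic (fibre F0 j) S"
    proof
      fix j assume "j \<in> sP F0"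
      then have j: "j < Suc n" by (auto simp: F0_def)
      have "in_Kpfc k ar K (prestrict M A1 {dd j})" using lim_age[OF lim] A1 dd_in[OF j] by auto
      then obtain S where S: "S \<in> K" "lisomorphic (fibre (prestrict M A1 {dd j}) (dd j)) S"
        unfolding in_Kpfc_def by (auto simp: prestrict_def)
      then obtain h where h: "liso h (fibre (prestrict M A1 {dd j}) (dd j)) S" unfolding lisomorphic_def by blast
      have "liso e (fibre F0 j) (fibre (prestrict M A1 {dd j}) (dd j))"
        unfolding liso_def lemb_def fibre_def prestrict_def
      proof (simp, intro conjI)
        show "inj_on e (sO F0)" using einj by (simp add: F0_def)
        show "e ` sO F0 = A1" using eimg by (simp add: F0_def)
        then show "e ` sO F0 \<subseteq> A1" by simp
        show "\<forall>i. \<forall>ys\<in>lists (sO F0). prel F0 i j ys = (prel M i (dd j) (map e ys) \<and> e ` set ys \<subseteq> A1)"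
          using j eimg by (auto simp: F0_def)
      qed
      then have "liso (h \<circ> e) (fibre F0 j) S" using h by (rule liso_trans)
      then show "\<exists>S\<in>K. lisomorphic (fibre F0 j) S" using S(1) unfolding lisomorphic_def by blast
    qed
  qed
  obtain f g where fg: "pemb f g F0 M" using lim_univ[OF lim] Kp by blast
  have finj: "inj_on f {..<m}" and ginj: "inj_on g {..<Suc n}"
    and fimg: "f ` {..<m} \<subseteq> sO M" and gimg: "g ` {..<Suc n} \<subseteq> sP M"
    and frel: "\<And>i j ys. j < Suc n \<Longrightarrow> ys \<in> lists {..<m} \<Longrightarrow>
        prel F0 i j ys \<longleftrightarrow> prel M i (g j) (map f ys)"
    using fg unfolding pemb_def by (auto simp: F0_def)
  have frel': "prel M i (g j) (map f ys) \<longleftrightarrow> prel M i (dd j) (map e ys)"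
    if "j < Suc n" "ys \<in> lists {..<m}" for i j ys
    using frel[OF that] that by (auto simp: F0_def)
  have ginj': "inj_on g {..<n}" using ginj by (rule inj_on_subset) auto
  define A2 where "A2 = f ` {..<m}"
  define C2 where "C2 = g ` {..<n}"
  define \<phi> where "\<phi> = (\<lambda>x. e (inv_into {..<m} f x))"
  define \<psi> where "\<psi> = (\<lambda>x. cs ! (inv_into {..<n} g x))"
  have \<phi>f: "\<phi> (f i) = e i" if "i < m" for i using finj that unfolding \<phi>_def by (simp add: inv_into_f_f)
  have \<psi>g: "\<psi> (g j) = cs ! j" if "j < n" for j using ginj' that unfolding \<psi>_def by (simp add: inv_into_f_f)
  have lists_A2: "\<exists>ys0\<in>lists {..<m}. ys = map f ys0" if "ys \<in> lists A2" for ys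
  proof -
    have "\<forall>y\<in>set ys. \<exists>i<m. y = f i" using that unfolding A2_def by auto
    then show ?thesis
    proof (induction ys)
      case Nil then show ?case by auto
    next
      case (Cons y ys)
      then obtain ys0 where "ys0 \<in> lists {..<m}" "ys = map f ys0" by auto
      moreover obtain i where "i < m" "y = f i" using Cons.prems by auto
      ultimately show ?case by (intro bexI[of _ "i # ys0"]) auto
    qed
  qed
  have lists_A1: "\<exists>ys0\<in>lists {..<m}. ys = map e ys0" if "ys \<in> lists A1" for ys
  proof -
    have "\<forall>y\<in>set ys. \<exists>i<m. y = e i" using that eimg by auto
    then show ?thesis
    proof (induction ys)
      case Nil then show ?case by auto
    next
      case (Cons y ys)
      then obtain ys0 where "ys0 \<in> lists {..<m}" "ys = map e ys0" by auto
      moreover obtain i where "i < m" "y = e i" using Cons.prems by auto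
      ultimately show ?case by (intro bexI[of _ "i # ys0"]) auto
    qed
  qed
  have iso: "piso \<phi> \<psi> (prestrict M A2 C2) (prestrict M A1 C)"
  proof -
    have 1: "inj_on \<phi> A2"
    proof (rule inj_onI)
      fix x y assume "x \<in> A2" "y \<in> A2" "\<phi> x = \<phi> y"
      then obtain i j where "i < m" "j < m" "x = f i" "y = f j" "e i = e j" unfolding A2_def using \<phi>f by auto
      then show "x = y" using einj by (auto dest: inj_onD)
    qed
    have 2: "inj_on \<psi> C2"
    proof (rule inj_onI)
      fix x y assume "x \<in> C2" "y \<in> C2" "\<psi> x = \<psi> y"
      then obtain i j where "i < n" "j < n" "x = g i" "y = g j" "cs ! i = cs ! j" unfolding C2_def using \<psi>g by auto
      then show "x = y" using cinj by (auto dest: inj_onD)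
    qed
    have 3: "\<phi> ` A2 = A1" unfolding A2_def using \<phi>f eimg by (auto simp: image_iff)
    have 4: "\<psi> ` C2 = C" unfolding C2_def using \<psi>g cimg by (auto simp: image_iff)
    have 5: "prel M i c ys \<longleftrightarrow> prel M i (\<psi> c) (map \<phi> ys)" if cC: "c \<in> C2" and yA: "ys \<in> lists A2" for i c ys
    proof -
      obtain j where j: "j < n" "c = g j" using cC unfolding C2_def by auto
      obtain ys0 where ys0: "ys0 \<in> lists {..<m}" "ys = map f ys0" using lists_A2[OF yA] by blast
      have me: "map \<phi> ys = map e ys0" using ys0 \<phi>f by auto
      have pc: "\<psi> c = dd j" using j \<psi>g unfolding dd_def by auto
      have "prel M i c ys \<longleftrightarrow> prel M i (g j) (map f ys0)" using j ys0 by simp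
      also have "\<dots> \<longleftrightarrow> prel M i (dd j) (map e ys0)" using frel'[of j ys0 i] j ys0 by simp
      also have "\<dots> \<longleftrightarrow> prel M i (\<psi> c) (map \<phi> ys)" by (simp only: me pc)
      finally show ?thesis .
    qed
    have 6: "set (map \<phi> ys) \<subseteq> A1" if "ys \<in> lists A2" for ys using that 3 by auto
    show ?thesis unfolding piso_def pemb_def prestrict_def
      using 1 2 3 4 5 6 by auto
  qed
  have A2s: "A2 \<subseteq> sO M" "finite A2" using fimg unfolding A2_def by auto
  have C2s: "C2 \<subseteq> sP M" "finite C2" using gimg unfolding C2_def by auto
  have "\<exists>FF GG. piso FF GG M M \<and> (\<forall>a\<in>A2. FF a = \<phi> a) \<and> (\<forall>c\<in>C2. GG c = \<psi> c)"
    apply (rule lim_uh[OF lim, rule_format]) using A2s C2s A1 C iso by auto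
  then obtain FF GG where FG: "piso FF GG M M" "\<forall>a\<in>A2. FF a = \<phi> a" "\<forall>c\<in>C2. GG c = \<psi> c"
    by blast
  have GGinj: "inj_on GG (sP M)" and GGimg: "GG ` sP M = sP M"
    and GGrel: "\<And>i c ys. c \<in> sP M \<Longrightarrow> ys \<in> lists (sO M) \<Longrightarrow> prel M i c ys \<longleftrightarrow> prel M i (GG c) (map FF ys)"
    using FG(1) unfolding piso_def pemb_def by auto
  have gn: "g n \<in> sP M" using gimg by auto
  define b' where "b' = GG (g n)"
  have b'in: "b' \<in> sP M" using gn GGimg unfolding b'_def by blast
  have b'C: "b' \<notin> C"
  proof
    assume "b' \<in> C"
    then obtain j where j: "j < n" "b' = cs ! j" using cimg by auto
    then have "GG (g j) = GG (g n)" using FG(3) \<psi>g unfolding C2_def b'_def by auto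
    moreover have "g j \<in> sP M" using gimg j by auto
    ultimately have "g j = g n" using GGinj gn by (auto dest: inj_onD)
    then have "j = n" using ginj j by (auto dest: inj_onD)
    then show False using j by simp
  qed
  have fib: "prel M i b' ys \<longleftrightarrow> prel M i b ys" if yA: "ys \<in> lists A1" for i ys
  proof -
    obtain ys0 where ys0: "ys0 \<in> lists {..<m}" "ys = map e ys0" using lists_A1[OF yA] by blast
    have me2: "map FF (map f ys0) = map e ys0" using ys0(1) FG(2) \<phi>f unfolding A2_def by auto
    have mfl: "map f ys0 \<in> lists (sO M)" using ys0(1) fimg by (auto simp: image_subset_iff)
    have r: "prel M i (GG (g n)) (map FF (map f ys0)) \<longleftrightarrow> prel M i (g n) (map f ys0)"
      using GGrel[OF gn mfl, of i] by blast
    have "prel M i b' ys \<longleftrightarrow> prel M i (g n) (map f ys0)"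
      unfolding b'_def ys0(2) me2[symmetric] by (rule r)
    also have "\<dots> \<longleftrightarrow> prel M i (dd n) (map e ys0)" using frel'[of n ys0 i] ys0 by simp
    finally show ?thesis using ys0 unfolding dd_def by simp
  qed
  show ?thesis using b'in b'C fib by blast
qed



fun conjNeq :: "nat \<Rightarrow> nat list \<Rightarrow> fm \<Rightarrow> fm" where
  "conjNeq y [] r = r"
| "conjNeq y (w#ws) r = Conj (Neg (EqP y w)) (conjNeq y ws r)"

lemma sat_conjNeq: "sat M (conjNeq y ws r) va vb \<longleftrightarrow> (\<forall>w\<in>set ws. vb y \<noteq> vb w) \<and> sat M r va vb"
  by (induction ws) auto

lemma fv_conjNeq: "fvO (conjNeq y ws r) = fvO r" "fvP (conjNeq y ws r) \<subseteq> insert y (set ws \<union> fvP r)"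
  by (induction ws) auto

definition qf :: "fm \<Rightarrow> nat \<Rightarrow> nat list \<Rightarrow> nat list \<Rightarrow> fm" where
  "qf p y zs ws = Neg (Conj (conjNeq y zs p) (Neg (ExP y (conjNeq y ws p))))"

lemma sat_qf: "sat M (qf p y zs ws) va vb \<longleftrightarrow>
  ((\<forall>z\<in>set zs. vb y \<noteq> vb z) \<and> sat M p va vb \<longrightarrow>
   (\<exists>b\<in>sP M. (\<forall>w\<in>set ws. b \<noteq> (vb(y:=b)) w) \<and> sat M p va (vb(y:=b))))"
  by (simp add: qf_def sat_conjNeq) blast

lemma fv_qf: "fvO (qf p y zs ws) = fvO p" "fvP (qf p y zs ws) \<subseteq> insert y (set zs \<union> set ws \<union> fvP p)"
  unfolding qf_def using fv_conjNeq[of y zs p] fv_conjNeq[of y ws p] by auto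

lemma M_side:
  assumes lim: "fraisse_limit_pfc k ar K M"
    and zs: "set zs = fvP p - {y}" and ws: "set ws \<inter> insert y (fvP p) = {}"
    and va: "\<forall>x\<in>fvO p. va x \<in> sO M" and vb: "\<forall>x\<in>set (y#zs@ws). vb x \<in> sP M"
  shows "sat M (qf p y zs ws) va vb"
  unfolding sat_qf
proof (intro impI)
  assume H: "(\<forall>z\<in>set zs. vb y \<noteq> vb z) \<and> sat M p va vb"
  have wf: "wf_pstr k ar M" by (rule lim_wf[OF lim])
  define A1 where "A1 = va ` fvO p"
  define Z0 where "Z0 = vb ` set zs"
  define C where "C = vb ` set ws \<union> Z0"
  have A1: "finite A1" "A1 \<subseteq> sO M" unfolding A1_def using fin_fvO va by auto
  have Z: "finite Z0" "Z0 \<subseteq> sP M" unfolding Z0_def using vb by auto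
  have Cs: "finite C" "C \<subseteq> sP M" unfolding C_def Z0_def using vb by auto
  have b: "vb y \<in> sP M" "vb y \<notin> Z0" using vb H unfolding Z0_def by auto
  obtain b' where b': "b' \<in> sP M" "b' \<notin> C" "\<forall>i. \<forall>ys\<in>lists A1. prel M i b' ys \<longleftrightarrow> prel M i (vb y) ys"
    using new_point[OF lim A1 Cs b(1)] by blast
  have b'Z: "b' \<notin> Z0" using b'(2) unfolding C_def by auto
  obtain F G where FG: "piso F G M M" "\<forall>a\<in>A1. F a = a" "\<forall>z\<in>Z0. G z = z" "G (vb y) = b'"
    using swap_point[OF lim A1 Z b b'(1) b'Z b'(3)] by blast
  have vbp: "\<forall>x\<in>fvP p. vb x \<in> sP M" using vb zs by auto
  have "sat M p (F \<circ> va) (G \<circ> vb) \<longleftrightarrow> sat M p va vb" by (rule invar[OF wf FG(1) va vbp])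
  moreover have "sat M p (F \<circ> va) (G \<circ> vb) \<longleftrightarrow> sat M p va (vb(y:=b'))"
  proof (rule coinc)
    show "\<forall>x\<in>fvO p. (F \<circ> va) x = va x" using FG(2) unfolding A1_def by auto
    show "\<forall>x\<in>fvP p. (G \<circ> vb) x = (vb(y := b')) x"
    proof
      fix x assume x: "x \<in> fvP p"
      show "(G \<circ> vb) x = (vb(y := b')) x"
      proof (cases "x = y")
        case True then show ?thesis using FG(4) by simp
      next
        case False
        then have "vb x \<in> Z0" using x zs unfolding Z0_def by auto
        then show ?thesis using FG(3) False by simp
      qed
    qed
  qed
  ultimately have s2: "sat M p va (vb(y:=b'))" using H by simp
  have s1: "\<forall>w\<in>set ws. b' \<noteq> (vb(y:=b')) w"
  proof
    fix w assume w: "w \<in> set ws"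
    then have "w \<noteq> y" using ws by auto
    moreover have "vb w \<in> C" using w unfolding C_def by auto
    ultimately show "b' \<noteq> (vb(y:=b')) w" using b'(2) by auto
  qed
  show "\<exists>b\<in>sP M. (\<forall>w\<in>set ws. b \<noteq> (vb(y:=b)) w) \<and> sat M p va (vb(y:=b))"
  proof (rule bexI[of _ b'])
    show "(\<forall>w\<in>set ws. b' \<noteq> (vb(y:=b')) w) \<and> sat M p va (vb(y:=b'))" using s1 s2 by (rule conjI)
    show "b' \<in> sP M" by (rule b'(1))
  qed
qed



theorem lemma4p6:
  fixes k :: nat and ar :: "nat \<Rightarrow> nat" and K :: "nat lstr set"
    and M :: "('c, 'd) pstr" and N :: "('a, 'b) pstr"
    and A0 :: "'a set" and B0 :: "'b set"
  assumes "fraisse_class k ar K"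
    and "SAP K"
    and "fraisse_limit_pfc k ar K M"
    and "wf_pstr k ar N"
    and "models_Th N M"
    and "A0 \<subseteq> sO N" and "B0 \<subseteq> sP N"
  shows "aclP N A0 B0 = B0"
proof
  note lim = assms(3)
  show "aclP N A0 B0 \<subseteq> B0"
  proof
    fix b assume "b \<in> aclP N A0 B0"
    then obtain p y va vb where bN: "b \<in> sP N"
      and h1: "\<forall>x\<in>fvO p. va x \<in> A0" and h2: "\<forall>x\<in>fvP p - {y}. vb x \<in> B0"
      and h3: "sat N p va (vb(y := b))"
      and h4: "finite {b' \<in> sP N. sat N p va (vb(y := b'))}"
      unfolding aclP_def by blast
    define S where "S = {b' \<in> sP N. sat N p va (vb(y := b'))}"
    show "b \<in> B0"
    proof (rule ccontr)
      assume bB: "b \<notin> B0"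
      obtain sl where sl: "set sl = S" using h4 finite_list unfolding S_def by blast
      obtain zs where zs: "set zs = fvP p - {y}" using finite_list[of "fvP p - {y}"] fin_fvP by blast
      obtain xs where xs: "set xs = fvO p" using finite_list[of "fvO p"] fin_fvO by blast
      define mx where "mx = Max (insert y (fvP p))"
      define ws where "ws = map (\<lambda>i. Suc mx + i) [0..<length sl]"
      define vb' where "vb' = (\<lambda>x. if Suc mx \<le> x \<and> x - Suc mx < length sl then sl ! (x - Suc mx) else (vb(y:=b)) x)"
      have le: "x \<le> mx" if "x \<in> insert y (fvP p)" for x
        unfolding mx_def using that fin_fvP by (intro Max_ge) auto
      have ar: "(\<exists>i<L. x = a + i) \<longleftrightarrow> a \<le> x \<and> x - a < L" for a x L :: nat
      proof
        assume "a \<le> x \<and> x - a < L" then show "\<exists>i<L. x = a + i" by (intro exI[of _ "x - a"]) auto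
      qed auto
      have wsmem: "x \<in> set ws \<longleftrightarrow> Suc mx \<le> x \<and> x - Suc mx < length sl" for x
      proof -
        have "x \<in> set ws \<longleftrightarrow> (\<exists>i<length sl. x = Suc mx + i)" unfolding ws_def by auto
        then show ?thesis by (simp only: ar)
      qed
      have disj: "set ws \<inter> insert y (fvP p) = {}" using le wsmem by force
      have low: "vb' x = (vb(y:=b)) x" if "x \<le> mx" for x using that unfolding vb'_def by auto
      have img: "vb' ` set ws = S"
      proof
        show "vb' ` set ws \<subseteq> S" using wsmem sl unfolding vb'_def by auto
        show "S \<subseteq> vb' ` set ws"
        proof
          fix s assume "s \<in> S"
          then obtain i where i: "i < length sl" "s = sl ! i" using sl by (auto simp: in_set_conv_nth)
          then have "Suc mx + i \<in> set ws" using wsmem by simp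
          moreover have "vb' (Suc mx + i) = s" using i unfolding vb'_def by simp
          ultimately show "s \<in> vb' ` set ws" by blast
        qed
      qed
      have SN: "S \<subseteq> sP N" unfolding S_def by auto
      have q: "sat N (qf p y zs ws) va vb'"
      proof (rule transfer[OF assms(5)])
        show "fvO (qf p y zs ws) \<subseteq> set xs" using fv_qf xs by simp
        show "fvP (qf p y zs ws) \<subseteq> set (y # zs @ ws)" using fv_qf(2)[of p y zs ws] zs by auto
        show "\<forall>va vb. (\<forall>x\<in>set xs. va x \<in> sO M) \<longrightarrow> (\<forall>x\<in>set (y # zs @ ws). vb x \<in> sP M) \<longrightarrow> sat M (qf p y zs ws) va vb"
          using M_side[OF lim zs disj] xs by auto
        show "\<forall>x\<in>set xs. va x \<in> sO N" using h1 xs assms(6) by auto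
        show "\<forall>x\<in>set (y # zs @ ws). vb' x \<in> sP N"
        proof
          fix x assume x: "x \<in> set (y # zs @ ws)"
          show "vb' x \<in> sP N"
          proof (cases "x \<in> set ws")
            case True then show ?thesis using img SN by blast
          next
            case False
            then have "x = y \<or> x \<in> set zs" using x by auto
            then show ?thesis
            proof
              assume "x = y" then show ?thesis using low[of y] le[of y] bN by simp
            next
              assume xz: "x \<in> set zs"
              then have "x \<le> mx" "x \<noteq> y" "x \<in> fvP p" using le zs by auto
              then show ?thesis using low[of x] h2 assms(7) by auto
            qed
          qed
        qed
      qed
      have co: "sat N p va (vb'(y := c)) \<longleftrightarrow> sat N p va (vb(y := c))" for c
        by (rule coinc) (use low le in auto)
      have co2: "sat N p va vb' \<longleftrightarrow> sat N p va (vb(y := b))"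
        by (rule coinc) (use low le in auto)
      have prem: "(\<forall>z\<in>set zs. vb' y \<noteq> vb' z) \<and> sat N p va vb'"
      proof
        show "sat N p va vb'" using co2 h3 by simp
        show "\<forall>z\<in>set zs. vb' y \<noteq> vb' z"
        proof
          fix z assume z: "z \<in> set zs"
          then have "z \<le> mx" "z \<noteq> y" "z \<in> fvP p" using le zs by auto
          then have "vb' z \<in> B0" using low[of z] h2 by auto
          moreover have "vb' y = b" using low[of y] le[of y] by simp
          ultimately show "vb' y \<noteq> vb' z" using bB by auto
        qed
      qed
      obtain c where c: "c \<in> sP N" "\<forall>w\<in>set ws. c \<noteq> (vb'(y:=c)) w" "sat N p va (vb'(y:=c))"
        using q prem unfolding sat_qf by blast
      have "c \<in> S" using c(1,3) co unfolding S_def by simp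
      then obtain w where w: "w \<in> set ws" "c = vb' w" using img by auto
      moreover have "w \<noteq> y" using w(1) disj by auto
      ultimately show False using c(2) by auto
    qed
  qed
  show "B0 \<subseteq> aclP N A0 B0"
  proof
    fix b0 assume b0: "b0 \<in> B0"
    let ?p = "EqP 0 1"
    have fin: "finite {b' \<in> sP N. sat N ?p (\<lambda>_. undefined) ((\<lambda>_. b0)(0 := b'))}"
      by (rule finite_subset[of _ "{b0}"]) auto
    have bN: "b0 \<in> sP N" using b0 assms(7) by auto
    have ex: "\<exists>p y va vb. (\<forall>x\<in>fvO p. va x \<in> A0) \<and> (\<forall>x\<in>fvP p - {y}. vb x \<in> B0) \<and>
      sat N p va (vb(y := b0)) \<and> finite {b' \<in> sP N. sat N p va (vb(y := b'))}"
      apply (rule exI[of _ ?p])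
      apply (rule exI[of _ "0::nat"])
      apply (rule exI[of _ "\<lambda>_::nat. undefined::'a"])
      apply (rule exI[of _ "\<lambda>_::nat. b0"])
      using b0 fin by simp
    show "b0 \<in> aclP N A0 B0" unfolding aclP_def using bN ex by blast
  qed
qed


end
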